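(* Let $n\in\mathbb{N}$, let $\lambda$ be a partition with at most $2n$ parts and $\mu\subseteq\lambda$ a partition with at most $n$ parts, and let $Q\in Rec_{2n}(\lambda/\mu)$, with associated chain of partitions $$\lambda=\mu^{(0)}\supseteq\mu^{(1)}\supseteq\cdots\supseteq\mu^{(N)}=\mu ,$$ where each $\mu^{(i-1)}/\mu^{(i)}$ is a vertical strip with $Q[i]$ cells. For $1\le i\le N$ let $t_0^{(i)}$ be the slack and $\mathbf{r}^{(i)}$ the slack vector of the strip $\mu^{(i-1)}/\mu^{(i)}$, and put $t_0^{(0)}:=0$, $\mathbf{r}^{(0)}:=()$. Then for each $1\le i\le N$: (a) $\ell(\mu^{(i-1)})=Q[i]+t_0^{(i)}\ge \ell(\mu^{(i)})$; (b) $0\le t_0^{(i-1)}\le t_0^{(i)}\le \ell(\mu^{(i)})\le \ell(\mu^{(i-1)})$; in particular the slack sequence $(t_0^{(N)},\dots,t_0^{(1)})$ is weakly decreasing and $(\ell(\mu^{(N)}),\dots,\ell(\mu^{(1)}),\ell(\mu^{(0)}))$ is weakly increasing; (c) $2n\ge Q[i]+2t_0^{(i)}=\ell(\mu^{(i-1)})+t_0^{(i)}$, equivalently $2n-t_0^{(i)}\ge Q[i]+t_0^{(i)}=\ell(\mu^{(i-1)})$; (d) $\mathbf{r}^{(i)}\le_{\mathbf{r}}\mathbf{r}^{(i-1)}$, so that the slack vector sequence satisfies $\mathbf{r}^{(N)}\le_{\mathbf{r}}\cdots\le_{\mathbf{r}}\mathbf{r}^{(1)}$; (e) $\mathbf{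r}^{(i)}\subseteq[1,\ell(\mu^{(i)})]\subseteq[1,\ell(\mu^{(i-1)})]\subseteq[1,2n-t_0^{(i)}]$.
   Context: Partitions $\gamma=(\gamma_1\ge\gamma_2\ge\cdots)$ are identified with Young diagrams (cells $(i,j)$, $1\le i\le\ell(\gamma)$, $1\le j\le\gamma_i$, matrix coordinates); $\ell(\gamma)$ is the number of nonzero parts. For $\alpha\subseteq\gamma$, $\gamma/\alpha$ is a vertical strip if it has at most one cell in each row. A partition $\nu$ is even if $\nu_{2i-1}=\nu_{2i}$ for all $i\ge1$. A semistandard tableau $T$ of skew shape $\lambda/\mu$ with entries in $[1,2n]$ is a filling of the cells of $\lambda/\mu$ weakly increasing along rows and strictly increasing down columns; set $T(a,b)=0$ for cells of $\mu$ and $T(a,b)=\infty$ for $(a,b)\notin\lambda$. Its weight is $(T[1],\dots,T[2n])$, $T[k]$ = number of entries equal to $k$. Its reverse column word is obtained by reading the columns from right to left, each column from top to bottom. A word is Yamanouchi if the weight of each of its prefixes is a partition. $T$ is a Littlewood–Richardson–Sundaram tableau if (1) its reverse column word is Yamanouchi, (2) its weight $\nu=(T[1],\dots,T[2n])$ is an even partition, and (3) $T(n+i,1)\ge 2i$ for every $i\ge0$. For such $T$ with weight $\nu$, let $N=\nu_1$. For $1\le k\le N$ let $J_k$ be the set of cells of $T$ containing the $k$-th occurrence (in the reverse column word) of some letter $j$ with $\nu_j\ge k$. Define $Q=\lozenge(T)$ as the filling of $\lambda/\mu$ with $Q(c)=k$ for $c\in J_k$. The set $Rec_{2n}(\lambda/\mu)$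 is the set of all such $Q$ as $T$ ranges over Littlewood–Richardson–Sundaram tableaux of shape $\lambda/\mu$. For $Q\in Rec_{2n}(\lambda/\mu)$, $Q[k]$ denotes the number of entries equal to $k$, $N$ its largest entry, and $\mu^{(k)}$ (for $0\le k\le N$) the partition whose diagram is $D(\mu)\cup\{c\in\lambda/\mu: Q(c)\ge k+1\}$; so $\mu^{(0)}=\lambda$, $\mu^{(N)}=\mu$, and $\mu^{(k-1)}/\mu^{(k)}$ is a vertical strip with $Q[k]$ cells, where $Q[k]\ge2$ is even and $(Q[1],\dots,Q[N])$ is the conjugate of an even partition. Slack data: for $1\le i\le N$, let $l_0^{(i)}$ be the number of cells of the strip $\mu^{(i-1)}/\mu^{(i)}$ lying in rows $1,\dots,\ell(\mu^{(i)})$; the slack is $t_0^{(i)}=\ell(\mu^{(i)})-l_0^{(i)}$, and the slack vector $\mathbf{r}^{(i)}=(r_1<\dots<r_{t_0^{(i)}})$ is the increasingly ordered set of row indices in $[1,\ell(\mu^{(i)})]$ containing no cell of $\mu^{(i-1)}/\mu^{(i)}$ (written $()$ when $t_0^{(i)}=0$). For $x\in\mathbb{Z}_{\ge0}^p$, $y\in\mathbb{Z}_{\ge0}^q$, write $x\le_{\mathbf{r}}y$ to mean $p\ge q\ge0$ and $x_j\le y_j$ whenever $y_j>0$ (in particular $x\le_{\mathbf{r}}()$ always). $[a,b]=\{a,a+1,\dots,b\}$. *)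

theory Defs
  imports Main "HOL-Library.Extended_Nat"
begin

text \<open>A partition is a weakly decreasing list of positive naturals (its nonzero parts);
  the length of the list is the number of parts. Cells are pairs (row, column), 1-based.\<close>

definition is_partition :: "nat list \<Rightarrow> bool" where
  "is_partition g \<longleftrightarrow> sorted_wrt (\<ge>) g \<and> 0 \<notin> set g"

definition ppart :: "nat list \<Rightarrow> nat \<Rightarrow> nat" where
  "ppart g i = (if 1 \<le> i \<and> i \<le> length g then g ! (i - 1) else 0)"

definition diagram :: "nat list \<Rightarrow> (nat \<times> nat) set" where
  "diagram g = {(i, j). 1 \<le> i \<and> i \<le> length g \<and> 1 \<le> j \<and> j \<le> ppart g i}"

definition skew :: "nat list \<Rightarrow> nat list \<Rightarrow> (nat \<times> nat) set" where
  "skew lam mu = diagram lam - diagram mu"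

definition ext_val :: "nat list \<Rightarrow> nat list \<Rightarrow> (nat \<times> nat \<Rightarrow> nat) \<Rightarrow> nat \<times> nat \<Rightarrow> enat" where
  "ext_val lam mu T c =
     (if c \<in> diagram mu then 0 else if c \<in> diagram lam then enat (T c) else \<infinity>)"

definition semistandard :: "nat \<Rightarrow> nat list \<Rightarrow> nat list \<Rightarrow> (nat \<times> nat \<Rightarrow> nat) \<Rightarrow> bool" where
  "semistandard m lam mu T \<longleftrightarrow>
     (\<forall>c \<in> skew lam mu. 1 \<le> T c \<and> T c \<le> m) \<and>
     (\<forall>a b. (a, b) \<in> skew lam mu \<and> (a, b + 1) \<in> skew lam mu \<longrightarrow> T (a, b) \<le> T (a, b + 1)) \<and>
     (\<forall>a b. (a, b) \<in> skew lam mu \<and> (a + 1, b) \<in> skew lam mu \<longrightarrow> T (a, b) < T (a + 1, b))"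

definition weight :: "nat list \<Rightarrow> nat list \<Rightarrow> (nat \<times> nat \<Rightarrow> nat) \<Rightarrow> nat \<Rightarrow> nat" where
  "weight lam mu T k = card {c \<in> skew lam mu. T c = k}"

text \<open>Cells in reverse column reading order: columns right to left, each top to bottom.\<close>
definition rcw_cells :: "nat list \<Rightarrow> nat list \<Rightarrow> (nat \<times> nat) list" where
  "rcw_cells lam mu =
     concat (map (\<lambda>j. filter (\<lambda>c. c \<in> skew lam mu) (map (\<lambda>a. (a, j)) [1..<length lam + 1]))
                 (rev [1..<ppart lam 1 + 1]))"

definition rcw :: "nat list \<Rightarrow> nat list \<Rightarrow> (nat \<times> nat \<Rightarrow> nat) \<Rightarrow> nat list" where
  "rcw lam mu T = map T (rcw_cells lam mu)"

definition yamanouchi :: "nat \<Rightarrow> nat list \<Rightarrow> bool" where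
  "yamanouchi m w \<longleftrightarrow>
     (\<forall>p \<le> length w. \<forall>k. 1 \<le> k \<and> k < m \<longrightarrow>
        count_list (take p w) (k + 1) \<le> count_list (take p w) k)"

definition LRS :: "nat \<Rightarrow> nat list \<Rightarrow> nat list \<Rightarrow> (nat \<times> nat \<Rightarrow> nat) \<Rightarrow> bool" where
  "LRS n lam mu T \<longleftrightarrow>
     semistandard (2 * n) lam mu T \<and>
     yamanouchi (2 * n) (rcw lam mu T) \<and>
     (\<forall>k. 1 \<le> k \<and> k < 2 * n \<longrightarrow> weight lam mu T (k + 1) \<le> weight lam mu T k) \<and>
     (\<forall>i \<ge> 1. weight lam mu T (2 * i - 1) = weight lam mu T (2 * i)) \<and>
     (\<forall>i. ext_val lam mu T (n + i, 1) \<ge> enat (2 * i))"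

text \<open>J k: cells holding the k-th occurrence (in the reverse column word) of a letter j
  with weight j \<ge> k.\<close>
definition J_set :: "nat list \<Rightarrow> nat list \<Rightarrow> (nat \<times> nat \<Rightarrow> nat) \<Rightarrow> nat \<Rightarrow> (nat \<times> nat) set" where
  "J_set lam mu T k =
     {rcw_cells lam mu ! p | p. p < length (rcw_cells lam mu) \<and>
        weight lam mu T (rcw lam mu T ! p) \<ge> k \<and>
        count_list (take (Suc p) (rcw lam mu T)) (rcw lam mu T ! p) = k}"

definition lozenge :: "nat list \<Rightarrow> nat list \<Rightarrow> (nat \<times> nat \<Rightarrow> nat) \<Rightarrow> (nat \<times> nat \<Rightarrow> nat)" where
  "lozenge lam mu T =
     (\<lambda>c. if c \<in> skew lam mu
          then (THE k. 1 \<le> k \<and> k \<le> weight lam mu T 1 \<and> c \<in> J_set lam mu T k)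
          else 0)"

definition Rec :: "nat \<Rightarrow> nat list \<Rightarrow> nat list \<Rightarrow> (nat \<times> nat \<Rightarrow> nat) set" where
  "Rec n lam mu = {lozenge lam mu T | T. LRS n lam mu T}"

definition Qcount :: "nat list \<Rightarrow> nat list \<Rightarrow> (nat \<times> nat \<Rightarrow> nat) \<Rightarrow> nat \<Rightarrow> nat" where
  "Qcount lam mu Q k = card {c \<in> skew lam mu. Q c = k}"

definition Nmax :: "nat list \<Rightarrow> nat list \<Rightarrow> (nat \<times> nat \<Rightarrow> nat) \<Rightarrow> nat" where
  "Nmax lam mu Q = Max (insert 0 (Q ` skew lam mu))"

definition mu_chain :: "nat list \<Rightarrow> nat list \<Rightarrow> (nat \<times> nat \<Rightarrow> nat) \<Rightarrow> nat \<Rightarrow> nat list" where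
  "mu_chain lam mu Q k =
     (THE g. is_partition g \<and> diagram g = diagram mu \<union> {c \<in> skew lam mu. Q c \<ge> k + 1})"

definition chain_strip :: "nat list \<Rightarrow> nat list \<Rightarrow> (nat \<times> nat \<Rightarrow> nat) \<Rightarrow> nat \<Rightarrow> (nat \<times> nat) set" where
  "chain_strip lam mu Q i = diagram (mu_chain lam mu Q (i - 1)) - diagram (mu_chain lam mu Q i)"

definition slack_l0 :: "nat list \<Rightarrow> nat list \<Rightarrow> (nat \<times> nat \<Rightarrow> nat) \<Rightarrow> nat \<Rightarrow> nat" where
  "slack_l0 lam mu Q i =
     card {c \<in> chain_strip lam mu Q i. 1 \<le> fst c \<and> fst c \<le> length (mu_chain lam mu Q i)}"

definition slack_t0 :: "nat list \<Rightarrow> nat list \<Rightarrow> (nat \<times> nat \<Rightarrow> nat) \<Rightarrow> nat \<Rightarrow> nat" where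
  "slack_t0 lam mu Q i =
     (if i = 0 then 0 else length (mu_chain lam mu Q i) - slack_l0 lam mu Q i)"

definition slack_vec :: "nat list \<Rightarrow> nat list \<Rightarrow> (nat \<times> nat \<Rightarrow> nat) \<Rightarrow> nat \<Rightarrow> nat list" where
  "slack_vec lam mu Q i =
     (if i = 0 then []
      else sorted_list_of_set
        {r. 1 \<le> r \<and> r \<le> length (mu_chain lam mu Q i) \<and> (\<forall>b. (r, b) \<notin> chain_strip lam mu Q i)})"

text \<open>x \<le>_r y (1-based components j correspond to list index j-1).\<close>
definition le_r :: "nat list \<Rightarrow> nat list \<Rightarrow> bool" where
  "le_r x y \<longleftrightarrow> length y \<le> length x \<and> (\<forall>j < length y. y ! j > 0 \<longrightarrow> x ! j \<le> y ! j)"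

end

theory Submission
  imports Defs
begin

lemma diagram_iff: "(a, b) \<in> diagram g \<longleftrightarrow> 1 \<le> a \<and> 1 \<le> b \<and> b \<le> ppart g a"
  by (auto simp: diagram_def ppart_def split: if_splits)

lemma part_mono:
  assumes "is_partition g" "1 \<le> a" "a \<le> a'"
  shows "ppart g a' \<le> ppart g a"
proof (cases "a' \<le> length g")
  case True
  then show ?thesis using assms
    by (cases "a = a'") (auto simp: ppart_def is_partition_def sorted_wrt_iff_nth_less)
qed (simp add: ppart_def)

lemma part_pos:
  assumes "is_partition g" "1 \<le> a" "a \<le> length g"
  shows "1 \<le> ppart g a"
proof -
  have "g ! (a - 1) \<in> set g" using assms by auto
  then have "g ! (a - 1) \<noteq> 0" using assms(1) unfolding is_partition_def by metis
  then show ?thesis using assms by (simp add: ppart_def)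
qed

lemma part_row1: "is_partition g \<Longrightarrow> (a, 1) \<in> diagram g \<longleftrightarrow> 1 \<le> a \<and> a \<le> length g"
  using part_pos[of g a] by (auto simp: diagram_iff ppart_def split: if_splits)

lemma diagram_row_le: "(a, b) \<in> diagram g \<Longrightarrow> a \<le> length g"
  by (auto simp: diagram_iff ppart_def split: if_splits)

lemma finite_diagram: "finite (diagram g)"
proof -
  have "diagram g \<subseteq> {..length g} \<times> {..sum_list g}"
  proof
    fix c assume "c \<in> diagram g"
    then obtain a b where c: "c = (a,b)" "1 \<le> a" "a \<le> length g" "b \<le> g ! (a - 1)"
      by (auto simp: diagram_def ppart_def split: if_splits)
    then have "g ! (a - 1) \<le> sum_list g" by (intro elem_le_sum_list) auto
    then show "c \<in> {..length g} \<times> {..sum_list g}" using c by auto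
  qed
  then show ?thesis by (rule finite_subset) auto
qed

lemma part_unique:
  assumes "is_partition g" "is_partition h" "diagram g = diagram h"
  shows "g = h"
proof -
  have len: "length g = length h"
  proof (rule ccontr)
    assume ne: "length g \<noteq> length h"
    show False
    proof (cases "length g < length h")
      case True
      then have "(length h, 1) \<in> diagram h" using part_row1[OF assms(2)] by simp
      then have "(length h, 1) \<in> diagram g" using assms(3) by simp
      then show False using part_row1[OF assms(1)] True by simp
    next
      case False
      then have lt: "length h < length g" using ne by simp
      then have "(length g, 1) \<in> diagram g" using part_row1[OF assms(1)] by simp
      then have "(length g, 1) \<in> diagram h" using assms(3) by simp
      then show False using part_row1[OF assms(2)] lt by simp
    qed
  qed
  have pp: "ppart g a = ppart h a" if "1 \<le> a" "a \<le> length g" for a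
  proof -
    have "(a, ppart g a) \<in> diagram g" using part_pos[OF assms(1) that] that by (simp add: diagram_iff)
    then have 1: "ppart g a \<le> ppart h a" using assms(3) by (simp add: diagram_iff)
    have "(a, ppart h a) \<in> diagram h" using part_pos[OF assms(2)] that len by (simp add: diagram_iff)
    then have "(a, ppart h a) \<in> diagram g" using assms(3) by simp
    then have "ppart h a \<le> ppart g a" by (simp add: diagram_iff)
    with 1 show ?thesis by simp
  qed
  show ?thesis
  proof (rule nth_equalityI)
    show "length g = length h" by fact
    fix k assume "k < length g"
    then show "g ! k = h ! k" using pp[of "Suc k"] len by (simp add: ppart_def)
  qed
qed

lemma down_closed_interval:
  fixes S :: "nat set"
  assumes "finite S" "\<forall>b\<in>S. 1 \<le> b" "\<forall>b\<in>S. 1 < b \<longrightarrow> b - 1 \<in> S"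
  shows "S = {1..card S}"
proof -
  have below: "b' \<in> S" if "b \<in> S" "1 \<le> b'" "b' \<le> b" for b b'
    using that
  proof (induction "b - b'" arbitrary: b)
    case 0 then show ?case by simp
  next
    case (Suc d)
    then have "b - 1 \<in> S" using assms(3) by auto
    then show ?case using Suc by (intro Suc(1)[of "b - 1"]) auto
  qed
  show ?thesis
  proof (cases "S = {}")
    case True then show ?thesis by simp
  next
    case False
    have "S = {1..Max S}"
    proof (rule set_eqI, rule iffI)
      fix x assume "x \<in> S"
      then show "x \<in> {1..Max S}" using assms(2) Max_ge[OF assms(1)] by auto
    next
      fix x assume "x \<in> {1..Max S}"
      then show "x \<in> S" using below[OF Max_in[OF assms(1) False]] by auto
    qed
    then have "card S = Max S" by (metis card_atLeastAtMost diff_Suc_1)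
    then show ?thesis using \<open>S = {1..Max S}\<close> by simp
  qed
qed

lemma diagram_exists:
  fixes D :: "(nat \<times> nat) set"
  assumes fin: "finite D" and pos: "\<forall>(a,b)\<in>D. 1 \<le> a \<and> 1 \<le> b"
    and left: "\<forall>(a,b)\<in>D. 1 < b \<longrightarrow> (a, b - 1) \<in> D"
    and up: "\<forall>(a,b)\<in>D. 1 < a \<longrightarrow> (a - 1, b) \<in> D"
  shows "\<exists>g. is_partition g \<and> diagram g = D"
proof -
  define rs where "rs a = {b. (a,b) \<in> D}" for a
  define rl where "rl a = card (rs a)" for a
  have finrs: "finite (rs a)" for a
  proof -
    have "rs a \<subseteq> snd ` D" by (force simp: rs_def)
    then show ?thesis using fin finite_subset by blast
  qed
  have rs_eq: "rs a = {1..rl a}" for a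
    unfolding rl_def using finrs pos left by (intro down_closed_interval) (auto simp: rs_def)
  define cs where "cs = {a. (a,1) \<in> D}"
  have fincs: "finite cs"
  proof -
    have "cs \<subseteq> fst ` D" by (force simp: cs_def)
    then show ?thesis using fin finite_subset by blast
  qed
  define L where "L = card cs"
  have cs_eq: "cs = {1..L}"
    unfolding L_def using fincs pos up by (intro down_closed_interval) (auto simp: cs_def)
  have inD: "(a,b) \<in> D \<longleftrightarrow> 1 \<le> b \<and> b \<le> rl a" for a b
    using rs_eq[of a] by (auto simp: rs_def set_eq_iff)
  have rowD: "(a,b) \<in> D \<Longrightarrow> 1 \<le> a \<and> a \<le> L" for a b
  proof -
    assume "(a,b) \<in> D"
    then have "(a,1) \<in> D" using inD by auto
    then show ?thesis using cs_eq by (auto simp: cs_def set_eq_iff)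
  qed
  have upmono: "rs a' \<subseteq> rs a" if "1 \<le> a" "a \<le> a'" for a a'
    using that
  proof (induction "a' - a" arbitrary: a')
    case 0 then show ?case by simp
  next
    case (Suc d)
    have "1 < a'" using Suc.hyps(2) Suc.prems by linarith
    then have "rs a' \<subseteq> rs (a' - 1)" using up by (fastforce simp: rs_def)
    moreover have "rs (a' - 1) \<subseteq> rs a" using Suc by (intro Suc(1)) auto
    ultimately show ?case by blast
  qed
  define g where "g = map rl [1..<L+1]"
  have ppg: "ppart g a = (if 1 \<le> a \<and> a \<le> L then rl a else 0)" for a
    by (auto simp: g_def ppart_def simp del: upt_Suc)
  have "is_partition g"
    unfolding is_partition_def
  proof
    show "sorted_wrt (\<ge>) g"
      unfolding sorted_wrt_iff_nth_less g_def
    proof (intro allI impI)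
      fix i j assume ij0: "i < j" "j < length (map rl [1..<L+1])"
      then have ij: "i < j \<and> j < length (map rl [1..<L+1])" by simp
      then have "rs (Suc j) \<subseteq> rs (Suc i)" using upmono by auto
      then have "rl (Suc j) \<le> rl (Suc i)" unfolding rl_def using finrs by (intro card_mono)
      then show "map rl [1..<L + 1] ! j \<le> map rl [1..<L + 1] ! i" using ij
        by (simp del: upt_Suc)
    qed
    show "0 \<notin> set g"
    proof
      assume "0 \<in> set g"
      then obtain a where a: "1 \<le> a" "a \<le> L" "rl a = 0" by (auto simp: g_def)
      then have "(a,1) \<in> D" using cs_eq by (auto simp: cs_def set_eq_iff)
      then show False using inD a by auto
    qed
  qed
  moreover have "diagram g = D"
  proof (rule set_eqI)
    fix c :: "nat \<times> nat"
    obtain a b where c: "c = (a,b)" by force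
    show "c \<in> diagram g \<longleftrightarrow> c \<in> D"
      unfolding c diagram_iff ppg using inD rowD pos by auto
  qed
  ultimately show ?thesis by blast
qed


definition rb :: "nat \<times> nat \<Rightarrow> nat \<times> nat \<Rightarrow> bool" where
  "rb c' c \<longleftrightarrow> snd c < snd c' \<or> (snd c' = snd c \<and> fst c' < fst c)"

lemma rb_irrefl: "\<not> rb c c" by (simp add: rb_def)
lemma rb_asym: "rb c c' \<Longrightarrow> \<not> rb c' c" by (auto simp: rb_def)
lemma rb_trans: "rb x y \<Longrightarrow> rb y z \<Longrightarrow> rb x z" by (auto simp: rb_def)
lemma rb_total: "c \<noteq> c' \<Longrightarrow> rb c c' \<or> rb c' c" by (cases c; cases c'; auto simp: rb_def)

lemma sorted_wrt_distinct_irrefl: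
  "sorted_wrt R xs \<Longrightarrow> (\<And>x. \<not> R x x) \<Longrightarrow> distinct xs"
  by (induction xs) auto

lemma rcw_cols_sorted:
  "sorted_wrt rb (concat (map (\<lambda>j. filter P (map (\<lambda>a. (a, j)) [1..<K + 1])) (rev [1..<m + 1])))"
proof (induction m)
  case 0 then show ?case by simp
next
  case (Suc m)
  have col: "sorted_wrt rb (filter P (map (\<lambda>a. (a, Suc m)) [1..<K + 1]))"
    by (intro sorted_wrt_filter) (auto simp: sorted_wrt_map rb_def sorted_wrt_iff_nth_less simp del: upt_Suc)
  have eq: "rev [1..<Suc m + 1] = Suc m # rev [1..<m + 1]" by simp
  let ?c = "filter P (map (\<lambda>a. (a, Suc m)) [1..<K + 1])"
  let ?r = "concat (map (\<lambda>j. filter P (map (\<lambda>a. (a, j)) [1..<K + 1])) (rev [1..<m + 1]))"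
  have cross: "\<forall>x\<in>set ?c. \<forall>y\<in>set ?r. rb x y"
    by (auto simp: rb_def simp del: upt_Suc)
  have "sorted_wrt rb (?c @ ?r)" using Suc.IH col cross by (simp only: sorted_wrt_append)
  then show ?case unfolding eq by simp
qed

lemma rcw_sorted: "sorted_wrt rb (rcw_cells lam mu)"
  unfolding rcw_cells_def by (rule rcw_cols_sorted)

lemma rcw_distinct: "distinct (rcw_cells lam mu)"
  using rcw_sorted rb_irrefl by (rule sorted_wrt_distinct_irrefl)

lemma rcw_set:
  assumes "is_partition lam"
  shows "set (rcw_cells lam mu) = skew lam mu"
proof -
  have "c \<in> skew lam mu \<Longrightarrow> 1 \<le> fst c \<and> fst c \<le> length lam \<and> 1 \<le> snd c \<and> snd c \<le> ppart lam 1" for c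
    using part_mono[OF assms, of 1 "fst c"] diagram_row_le[of "fst c" "snd c" lam]
    by (cases c) (auto simp: skew_def diagram_iff)
  then show ?thesis unfolding rcw_cells_def by (force simp del: upt_Suc)
qed

lemma take_set_sorted:
  assumes "sorted_wrt R xs" "distinct xs" "\<And>x y. R x y \<Longrightarrow> \<not> R y x" "p < length xs"
  shows "set (take (Suc p) xs) = {x \<in> set xs. x = xs ! p \<or> R x (xs ! p)}"
proof (rule set_eqI, rule iffI)
  fix x assume "x \<in> set (take (Suc p) xs)"
  then obtain q where q: "q < Suc p" "q < length xs" "x = xs ! q" by (auto simp: in_set_conv_nth)
  then show "x \<in> {x \<in> set xs. x = xs ! p \<or> R x (xs ! p)}"
    using assms(1,4) by (cases "q = p") (auto simp: sorted_wrt_iff_nth_less)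
next
  fix x assume x: "x \<in> {x \<in> set xs. x = xs ! p \<or> R x (xs ! p)}"
  then obtain q where q: "q < length xs" "x = xs ! q" by (auto simp: in_set_conv_nth)
  have "q \<le> p"
  proof (rule ccontr)
    assume "\<not> q \<le> p"
    then have "R (xs ! p) (xs ! q)" using assms(1) q by (auto simp: sorted_wrt_iff_nth_less)
    moreover have "xs ! q \<noteq> xs ! p" using assms(2,4) q \<open>\<not> q \<le> p\<close> by (simp add: nth_eq_iff_index_eq)
    ultimately show False using x q assms(3) by auto
  qed
  then show "x \<in> set (take (Suc p) xs)" using q by (auto simp: in_set_conv_nth)
qed

lemma count_list_distinct:
  "distinct xs \<Longrightarrow> count_list (map f xs) k = card {x \<in> set xs. f x = k}"
proof (induction xs)
  case Nil then show ?case by simp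
next
  case (Cons y ys)
  have e: "{x \<in> set (y # ys). f x = k} = (if f y = k then insert y {x \<in> set ys. f x = k} else {x \<in> set ys. f x = k})"
    by auto
  show ?case
  proof (cases "f y = k")
    case True
    then have "{x \<in> set (y # ys). f x = k} = insert y {x \<in> set ys. f x = k}" using e by simp
    moreover have "y \<notin> {x \<in> set ys. f x = k}" using Cons.prems by simp
    ultimately show ?thesis using Cons True by simp
  next
    case False
    then have "{x \<in> set (y # ys). f x = k} = {x \<in> set ys. f x = k}" using e by simp
    then show ?thesis using Cons False by simp
  qed
qed


locale lrs =
  fixes n :: nat and lam mu :: "nat list" and T :: "nat \<times> nat \<Rightarrow> nat"
  assumes plam: "is_partition lam" and pmu: "is_partition mu"
    and lmu: "length mu \<le> n" and LRS: "LRS n lam mu T"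
begin

abbreviation "sk \<equiv> skew lam mu"
abbreviation "cells \<equiv> rcw_cells lam mu"
abbreviation "wt \<equiv> weight lam mu T"

definition bef :: "nat \<times> nat \<Rightarrow> nat \<times> nat \<Rightarrow> bool" where
  "bef c' c \<longleftrightarrow> c' = c \<or> rb c' c"

definition cnt :: "nat \<times> nat \<Rightarrow> nat \<Rightarrow> nat" where
  "cnt c k = card {x \<in> sk. bef x c \<and> T x = k}"

definition rk :: "nat \<times> nat \<Rightarrow> nat" where
  "rk c = cnt c (T c)"

lemma sk_iff: "(a, b) \<in> sk \<longleftrightarrow> 1 \<le> a \<and> 1 \<le> b \<and> b \<le> ppart lam a \<and> ppart mu a < b"
  by (auto simp: skew_def diagram_iff)

lemma fin_sk: "finite sk"
  unfolding skew_def using finite_diagram by blast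

lemma ss: "semistandard (2 * n) lam mu T" using LRS by (simp add: LRS_def)

lemma ss_range: "c \<in> sk \<Longrightarrow> 1 \<le> T c \<and> T c \<le> 2 * n"
  using ss by (simp add: semistandard_def)

lemma ss_row: "(a, b) \<in> sk \<Longrightarrow> (a, b + 1) \<in> sk \<Longrightarrow> T (a, b) \<le> T (a, b + 1)"
  using ss unfolding semistandard_def by blast

lemma ss_col: "(a, b) \<in> sk \<Longrightarrow> (a + 1, b) \<in> sk \<Longrightarrow> T (a, b) < T (a + 1, b)"
  using ss unfolding semistandard_def by blast

lemma row_mono:
  assumes "(a, b) \<in> sk" "(a, b') \<in> sk" "b \<le> b'"
  shows "T (a, b) \<le> T (a, b')"
  using assms
proof (induction "b' - b" arbitrary: b')
  case 0 then show ?case by simp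
next
  case (Suc d)
  have in1: "(a, b' - 1) \<in> sk"
    using Suc.prems Suc.hyps(2) part_mono[OF pmu, of a] by (auto simp: sk_iff)
  have "T (a, b) \<le> T (a, b' - 1)" using Suc in1 by (intro Suc(1)) auto
  moreover have "T (a, b' - 1) \<le> T (a, b' - 1 + 1)"
  proof -
    have "b' - 1 + 1 = b'" using Suc.hyps(2) by simp
    then have "(a, b' - 1 + 1) \<in> sk" using Suc.prems(2) by simp
    then show ?thesis using ss_row[OF in1] by simp
  qed
  ultimately show ?case using Suc.hyps(2) by simp
qed

lemma col_strict:
  assumes "(a, b) \<in> sk" "(a', b) \<in> sk" "a < a'"
  shows "T (a, b) < T (a', b)"
  using assms
proof (induction "a' - a" arbitrary: a' rule: nat_less_induct)
  case 1
  have aa: "a \<le> a' - 1" "1 \<le> a" using 1(2,4) by (auto simp: sk_iff)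
  then have in1: "(a' - 1, b) \<in> sk"
    using 1(2-4) part_mono[OF pmu aa(2) aa(1)] part_mono[OF plam, of "a' - 1" a'] by (auto simp: sk_iff)
  have st: "T (a' - 1, b) < T (a' - 1 + 1, b)"
  proof -
    have "a' - 1 + 1 = a'" using 1(4) by simp
    then have "(a' - 1 + 1, b) \<in> sk" using 1(3) by simp
    then show ?thesis using ss_col[OF in1] by simp
  qed
  show ?case
  proof (cases "a = a' - 1")
    case True then show ?thesis using st 1(4) by simp
  next
    case False
    then have "T (a, b) < T (a' - 1, b)" using 1 in1 by (intro 1(1)[rule_format]) auto
    then show ?thesis using st 1(4) by simp
  qed
qed

lemma bef_refl: "bef c c" by (simp add: bef_def)
lemma bef_trans: "bef x y \<Longrightarrow> bef y z \<Longrightarrow> bef x z" by (auto simp: bef_def intro: rb_trans)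
lemma bef_total: "bef x y \<or> bef y x" using rb_total[of x y] by (auto simp: bef_def)
lemma bef_antisym: "bef x y \<Longrightarrow> bef y x \<Longrightarrow> x = y" using rb_asym[of x y] by (auto simp: bef_def)

lemma cnt_mono: "bef c c' \<Longrightarrow> cnt c k \<le> cnt c' k"
  unfolding cnt_def using fin_sk by (intro card_mono) (auto intro: bef_trans)

lemma pref_set:
  assumes "p < length cells"
  shows "set (take (Suc p) cells) = {x \<in> sk. bef x (cells ! p)}"
  using take_set_sorted[OF rcw_sorted rcw_distinct rb_asym assms] rcw_set[OF plam]
  by (auto simp: bef_def)

lemma cnt_word:
  assumes "p < length cells"
  shows "count_list (take (Suc p) (rcw lam mu T)) k = cnt (cells ! p) k"
proof -
  have "count_list (take (Suc p) (rcw lam mu T)) k = count_list (map T (take (Suc p) cells)) k"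
    by (simp add: rcw_def take_map)
  also have "\<dots> = card {x \<in> set (take (Suc p) cells). T x = k}"
    using rcw_distinct by (intro count_list_distinct) simp
  also have "\<dots> = cnt (cells ! p) k" unfolding cnt_def pref_set[OF assms] by (rule arg_cong[where f=card]) auto
  finally show ?thesis .
qed

lemma cell_index:
  assumes "c \<in> sk"
  obtains p where "p < length cells" "cells ! p = c"
  using assms rcw_set[OF plam] by (metis in_set_conv_nth)

lemma yam:
  assumes "c \<in> sk" "1 \<le> k" "k < 2 * n"
  shows "cnt c (k + 1) \<le> cnt c k"
proof -
  obtain p where p: "p < length cells" "cells ! p = c" using cell_index[OF assms(1)] .
  have "yamanouchi (2 * n) (rcw lam mu T)" using LRS by (simp add: LRS_def)
  moreover have "Suc p \<le> length (rcw lam mu T)" using p by (simp add: rcw_def)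
  ultimately have "count_list (take (Suc p) (rcw lam mu T)) (k + 1) \<le> count_list (take (Suc p) (rcw lam mu T)) k"
    using assms unfolding yamanouchi_def by blast
  then show ?thesis using cnt_word[OF p(1)] p(2) by simp
qed

lemma yam_chain:
  assumes "c \<in> sk" "1 \<le> j" "j \<le> j'" "j' \<le> 2 * n"
  shows "cnt c j' \<le> cnt c j"
  using assms
proof (induction "j' - j" arbitrary: j')
  case 0 then show ?case by simp
next
  case (Suc d)
  have "cnt c (j' - 1) \<le> cnt c j" using Suc by (intro Suc(1)) auto
  moreover have "cnt c (j' - 1 + 1) \<le> cnt c (j' - 1)" using Suc by (intro yam) auto
  ultimately show ?case using Suc.hyps(2) by simp
qed

lemma wt_big: "2 * n < j \<Longrightarrow> wt j = 0"
proof -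
  assume j: "2 * n < j"
  have "{c \<in> sk. T c = j} = {}" using ss_range j by fastforce
  then show ?thesis unfolding weight_def by (simp only: card.empty)
qed

lemma wt_mono:
  assumes "1 \<le> j" "j \<le> j'"
  shows "wt j' \<le> wt j"
proof (cases "j' \<le> 2 * n")
  case True
  have wm: "\<forall>k. 1 \<le> k \<and> k < 2 * n \<longrightarrow> wt (k + 1) \<le> wt k" using LRS by (simp add: LRS_def)
  show ?thesis using assms True
  proof (induction "j' - j" arbitrary: j')
    case 0 then show ?case by simp
  next
    case (Suc d)
    have "wt (j' - 1) \<le> wt j" using Suc by (intro Suc(1)) auto
    moreover have "wt (j' - 1 + 1) \<le> wt (j' - 1)"
    proof -
      have "1 \<le> j' - 1 \<and> j' - 1 < 2 * n" using Suc by auto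
      then show ?thesis using wm by blast
    qed
    ultimately show ?case using Suc.hyps(2) by simp
  qed
qed (simp add: wt_big)

lemma rk_pos: "c \<in> sk \<Longrightarrow> 1 \<le> rk c"
proof -
  assume c: "c \<in> sk"
  have "c \<in> {x \<in> sk. bef x c \<and> T x = T c}" using c bef_refl by simp
  then have "{x \<in> sk. bef x c \<and> T x = T c} \<noteq> {}" by blast
  then show ?thesis unfolding rk_def cnt_def using fin_sk
    by (metis (no_types, lifting) One_nat_def Suc_leI card_gt_0_iff finite_subset mem_Collect_eq subsetI)
qed

lemma rk_le: "rk c \<le> wt (T c)"
  unfolding rk_def cnt_def weight_def using fin_sk by (intro card_mono) auto

lemma rk_strict:
  assumes "c \<in> sk" "c' \<in> sk" "T c = T c'" "rb c c'"
  shows "rk c < rk c'"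
proof -
  have "{x \<in> sk. bef x c \<and> T x = T c} \<subset> {x \<in> sk. bef x c' \<and> T x = T c'}"
  proof
    show "{x \<in> sk. bef x c \<and> T x = T c} \<subseteq> {x \<in> sk. bef x c' \<and> T x = T c'}"
      using assms bef_trans[of _ c c'] by (auto simp: bef_def)
    have "\<not> bef c' c" using assms(4) rb_asym[of c c'] rb_irrefl[of c] by (auto simp: bef_def)
    then show "{x \<in> sk. bef x c \<and> T x = T c} \<noteq> {x \<in> sk. bef x c' \<and> T x = T c'}"
      using assms(2) bef_refl by blast
  qed
  then show ?thesis unfolding rk_def cnt_def using fin_sk
    by (intro psubset_card_mono) auto
qed

lemma rk_inj:
  assumes "c \<in> sk" "c' \<in> sk" "T c = T c'" "rk c = rk c'"
  shows "c = c'"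
proof (rule ccontr)
  assume "c \<noteq> c'"
  then have "rb c c' \<or> rb c' c" by (rule rb_total)
  then show False
    using rk_strict[OF assms(1-3)] rk_strict[OF assms(2,1) assms(3)[symmetric]] assms(4) by auto
qed

lemma rk_image: "rk ` {c \<in> sk. T c = j} = {1..wt j}"
proof -
  let ?A = "{c \<in> sk. T c = j}"
  have inj: "inj_on rk ?A" using rk_inj by (auto simp: inj_on_def)
  have sub: "rk ` ?A \<subseteq> {1..wt j}" using rk_pos rk_le by fastforce
  have "card (rk ` ?A) = wt j" using card_image[OF inj] by (simp add: weight_def)
  then show ?thesis using sub by (intro card_subset_eq) auto
qed

lemma rk_surj:
  assumes "1 \<le> k" "k \<le> wt j"
  obtains c where "c \<in> sk" "T c = j" "rk c = k"
proof -
  have "k \<in> rk ` {c \<in> sk. T c = j}" using assms rk_image by auto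
  then show ?thesis using that by auto
qed

lemma rk_row:
  assumes "(a, b) \<in> sk" "(a, b') \<in> sk" "b < b'"
  shows "rk (a, b') < rk (a, b)"
proof -
  let ?c = "(a, b)" and ?c' = "(a, b')"
  have "rk ?c' = cnt ?c' (T ?c')" by (simp add: rk_def)
  also have "\<dots> \<le> cnt ?c' (T ?c)"
    using assms row_mono[OF assms(1,2)] ss_range[OF assms(1)] ss_range[OF assms(2)]
    by (intro yam_chain) auto
  also have "\<dots> < cnt ?c (T ?c)"
  proof -
    have "{x \<in> sk. bef x ?c' \<and> T x = T ?c} \<subset> {x \<in> sk. bef x ?c \<and> T x = T ?c}"
    proof
      have "bef ?c' ?c" using assms(3) by (simp add: bef_def rb_def)
      then show "{x \<in> sk. bef x ?c' \<and> T x = T ?c} \<subseteq> {x \<in> sk. bef x ?c \<and> T x = T ?c}"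
        using bef_trans by blast
      have "\<not> bef ?c ?c'" using assms(3) by (simp add: bef_def rb_def)
      then show "{x \<in> sk. bef x ?c' \<and> T x = T ?c} \<noteq> {x \<in> sk. bef x ?c \<and> T x = T ?c}"
        using assms(1) bef_refl by blast
    qed
    then show ?thesis unfolding cnt_def using fin_sk by (intro psubset_card_mono) auto
  qed
  finally show ?thesis by (simp add: rk_def)
qed

lemma rk_col:
  assumes "(a, b) \<in> sk" "(a', b) \<in> sk" "a < a'"
  shows "rk (a', b) \<le> rk (a, b)"
proof -
  let ?c = "(a, b)" and ?c' = "(a', b)"
  have lt: "T ?c < T ?c'" by (rule col_strict[OF assms])
  have "rk ?c' = cnt ?c' (T ?c')" by (simp add: rk_def)
  also have "\<dots> \<le> cnt ?c' (T ?c)"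
    using assms lt ss_range[OF assms(1)] ss_range[OF assms(2)] by (intro yam_chain) auto
  also have "\<dots> \<le> cnt ?c (T ?c)"
    unfolding cnt_def
  proof (intro card_mono)
    show "finite {x \<in> sk. bef x ?c \<and> T x = T ?c}" using fin_sk by simp
    show "{x \<in> sk. bef x ?c' \<and> T x = T ?c} \<subseteq> {x \<in> sk. bef x ?c \<and> T x = T ?c}"
    proof safe
      fix u v assume uv: "(u, v) \<in> sk" "bef (u, v) ?c'" "T (u, v) = T ?c"
      show "bef (u, v) ?c"
      proof (rule ccontr)
        assume nb: "\<not> bef (u, v) ?c"
        then have "v = b" "a < u" "u \<le> a'" using uv(2) by (auto simp: bef_def rb_def)
        then have "T ?c < T (u, v)" using col_strict[OF assms(1)] uv(1) by auto
        then show False using uv(3) by simp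
      qed
    qed
  qed
  finally show ?thesis by (simp add: rk_def)
qed

lemma rk_rowle:
  assumes "c \<in> sk" "c'' \<in> sk" "T c = T c''" "rk c < rk c''"
  shows "fst c \<le> fst c''"
proof -
  obtain a b a'' b'' where cc: "c = (a, b)" "c'' = (a'', b'')" by force
  have "\<not> bef c'' c"
  proof
    assume "bef c'' c"
    then have "cnt c'' (T c) \<le> cnt c (T c)" by (rule cnt_mono)
    then show False using assms(3,4) by (simp add: rk_def)
  qed
  then have "rb c c''" using bef_total[of c c''] by (auto simp: bef_def)
  then have cases: "b'' < b \<or> (b'' = b \<and> a < a'')" using cc by (auto simp: rb_def)
  show ?thesis
  proof (rule ccontr)
    assume "\<not> fst c \<le> fst c''"
    then have lt: "a'' < a" using cc by simp
    with cases have bb: "b'' < b" by auto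
    have in1: "(a'', b) \<in> sk"
      using assms(1,2) cc lt bb part_mono[OF plam, of a'' a] by (auto simp: sk_iff)
    have "T (a'', b'') \<le> T (a'', b)" using row_mono[OF _ in1] assms(2) cc bb by auto
    moreover have "T (a'', b) < T (a, b)" using col_strict[OF in1] assms(1) cc lt by auto
    ultimately show False using assms(3) cc by simp
  qed
qed

lemma wt1: "c \<in> sk \<Longrightarrow> rk c \<le> wt 1"
  using rk_le[of c] wt_mono[of 1 "T c"] ss_range[of c] by simp

lemma lozenge_eq:
  assumes "c \<in> sk"
  shows "lozenge lam mu T c = rk c"
proof -
  obtain p where p: "p < length cells" "cells ! p = c" using cell_index[OF assms] .
  have wp: "rcw lam mu T ! p = T c" using p by (simp add: rcw_def)
  have J: "c \<in> J_set lam mu T k \<longleftrightarrow> k = rk c" for k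
  proof
    assume "c \<in> J_set lam mu T k"
    then obtain q where q: "c = cells ! q" "q < length cells"
      "count_list (take (Suc q) (rcw lam mu T)) (rcw lam mu T ! q) = k"
      unfolding J_set_def by blast
    have "q = p" using q p rcw_distinct nth_eq_iff_index_eq by metis
    then show "k = rk c" using q cnt_word[OF p(1)] wp p(2) by (simp add: rk_def)
  next
    assume "k = rk c"
    then show "c \<in> J_set lam mu T k"
      unfolding J_set_def using p wp cnt_word[OF p(1)] rk_le[of c] by (auto simp: rk_def)
  qed
  have "(THE k. 1 \<le> k \<and> k \<le> wt 1 \<and> c \<in> J_set lam mu T k) = rk c"
    using J rk_pos[OF assms] wt1[OF assms] by (intro the_equality) auto
  then show ?thesis using assms by (simp add: lozenge_def)
qed

end


lemma le_r_sets:
  fixes A B :: "nat set"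
  assumes fA: "finite A" and fB: "finite B" and cAB: "card B \<le> card A"
    and cnt: "\<And>x. card (B \<inter> {..x}) \<le> card (A \<inter> {..x})"
  shows "le_r (sorted_list_of_set A) (sorted_list_of_set B)"
  unfolding le_r_def
proof (intro conjI allI impI)
  let ?xs = "sorted_list_of_set A" and ?ys = "sorted_list_of_set B"
  show "length ?ys \<le> length ?xs" using cAB by simp
  fix j assume j: "j < length ?ys"
  let ?y = "?ys ! j"
  have "(\<lambda>k. ?ys ! k) ` {0..j} \<subseteq> B \<inter> {..?y}"
  proof
    fix z assume "z \<in> (\<lambda>k. ?ys ! k) ` {0..j}"
    then obtain k where k: "k \<le> j" "z = ?ys ! k" by auto
    have "z \<in> set ?ys" using k j by auto
    moreover have "z \<le> ?y" using k j sorted_nth_mono[OF sorted_sorted_list_of_set] by auto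
    ultimately show "z \<in> B \<inter> {..?y}" using fB by auto
  qed
  moreover have "inj_on (\<lambda>k. ?ys ! k) {0..j}"
    using j distinct_sorted_list_of_set[of B] by (auto simp: inj_on_def nth_eq_iff_index_eq)
  ultimately have "card {0..j} \<le> card (B \<inter> {..?y})"
    using fB by (metis (no_types, lifting) card_image card_mono finite_Int)
  then have c1: "Suc j \<le> card (A \<inter> {..?y})" using cnt[of ?y] by simp
  have jx: "j < length ?xs" using j cAB by simp
  show "?xs ! j \<le> ?ys ! j"
  proof (rule ccontr)
    assume "\<not> ?xs ! j \<le> ?ys ! j"
    then have big: "?y < ?xs ! j" by simp
    have "A \<inter> {..?y} \<subseteq> (\<lambda>k. ?xs ! k) ` {0..<j}"
    proof
      fix a assume a: "a \<in> A \<inter> {..?y}"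
      then have "a \<in> set ?xs" using fA by auto
      then obtain k where k: "k < length ?xs" "a = ?xs ! k" by (auto simp: in_set_conv_nth)
      have "k < j"
      proof (rule ccontr)
        assume "\<not> k < j"
        then have "j \<le> k" by simp
        then have "?xs ! j \<le> ?xs ! k" using k sorted_nth_mono[OF sorted_sorted_list_of_set, of j k A] by simp
        then show False using a k big by auto
      qed
      then show "a \<in> (\<lambda>k. ?xs ! k) ` {0..<j}" using k by auto
    qed
    then have "card (A \<inter> {..?y}) \<le> card {0..<j}"
      by (metis card_image_le finite_atLeastLessThan card_mono finite_imageI le_trans)
    then show False using c1 by simp
  qed
qed

context lrs
begin

abbreviation "Qf \<equiv> lozenge lam mu T"
definition D :: "nat \<Rightarrow> (nat \<times> nat) set" where
  "D k = diagram mu \<union> {c \<in> sk. Qf c \<ge> k + 1}"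
abbreviation "mc k \<equiv> mu_chain lam mu Qf k"
abbreviation "L k \<equiv> length (mc k)"
definition S :: "nat \<Rightarrow> (nat \<times> nat) set" where
  "S i = {c \<in> sk. Qf c = i}"

lemma mu_sk: "c \<in> diagram mu \<Longrightarrow> c \<notin> sk" by (simp add: skew_def)

lemma D_left: "(a, b) \<in> D k \<Longrightarrow> 1 < b \<Longrightarrow> (a, b - 1) \<in> D k"
proof -
  assume ab: "(a, b) \<in> D k" and b: "1 < b"
  show ?thesis
  proof (cases "(a, b) \<in> diagram mu")
    case True then show ?thesis using b by (auto simp: D_def diagram_iff)
  next
    case False
    then have sk1: "(a, b) \<in> sk" "rk (a, b) \<ge> k + 1" using ab lozenge_eq by (auto simp: D_def)
    show ?thesis
    proof (cases "(a, b - 1) \<in> diagram mu")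
      case True then show ?thesis by (simp add: D_def)
    next
      case False
      then have sk2: "(a, b - 1) \<in> sk" using sk1 b by (auto simp: sk_iff diagram_iff)
      have "rk (a, b - 1 + 1) < rk (a, b - 1)" using sk1 sk2 b by (intro rk_row) auto
      then show ?thesis using sk1 sk2 b lozenge_eq[OF sk2] by (simp add: D_def)
    qed
  qed
qed

lemma D_up: "(a, b) \<in> D k \<Longrightarrow> 1 < a \<Longrightarrow> (a - 1, b) \<in> D k"
proof -
  assume ab: "(a, b) \<in> D k" and a: "1 < a"
  show ?thesis
  proof (cases "(a, b) \<in> diagram mu")
    case True
    have "1 \<le> a - 1" using a by simp
    then have "ppart mu a \<le> ppart mu (a - 1)" using part_mono[OF pmu, of "a - 1" a] by simp
    then have "(a - 1, b) \<in> diagram mu" using True a by (auto simp: diagram_iff)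
    then show ?thesis by (simp add: D_def)
  next
    case False
    then have sk1: "(a, b) \<in> sk" "rk (a, b) \<ge> k + 1" using ab lozenge_eq by (auto simp: D_def)
    show ?thesis
    proof (cases "(a - 1, b) \<in> diagram mu")
      case True then show ?thesis by (simp add: D_def)
    next
      case False
      have "1 \<le> a - 1" using a by simp
      then have "ppart lam a \<le> ppart lam (a - 1)" using part_mono[OF plam, of "a - 1" a] by simp
      then have sk2: "(a - 1, b) \<in> sk" using sk1 a False
        by (auto simp: sk_iff diagram_iff)
      have "rk (a, b) \<le> rk (a - 1, b)" using sk1 sk2 a by (intro rk_col) auto
      then show ?thesis using sk1 sk2 lozenge_eq[OF sk2] by (simp add: D_def)
    qed
  qed
qed

lemma D_fin: "finite (D k)"
  unfolding D_def using finite_diagram fin_sk by simp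

lemma D_pos: "c \<in> D k \<Longrightarrow> 1 \<le> fst c \<and> 1 \<le> snd c"
  by (cases c) (auto simp: D_def diagram_iff sk_iff)

lemma mc_props: "is_partition (mc k) \<and> diagram (mc k) = D k"
proof -
  have "\<exists>g. is_partition g \<and> diagram g = D k"
    using D_fin D_pos D_left D_up by (intro diagram_exists) fastforce+
  then obtain g where g: "is_partition g" "diagram g = D k" by blast
  have "mc k = g"
    unfolding mu_chain_def D_def[symmetric]
    using g part_unique by (intro the_equality) auto
  then show ?thesis using g by simp
qed

lemma L_row: "c \<in> D k \<Longrightarrow> 1 \<le> fst c \<and> fst c \<le> L k"
  using mc_props[of k] diagram_row_le[of "fst c" "snd c" "mc k"] D_pos[of c k] by (cases c) auto

lemma L_row1: "1 \<le> a \<Longrightarrow> a \<le> L k \<Longrightarrow> (a, 1) \<in> D k"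
  using mc_props[of k] part_row1[of "mc k" a] by auto

lemma D_mono: "D (k + 1) \<subseteq> D k"
  by (auto simp: D_def)

lemma L_mono: "L (k + 1) \<le> L k"
proof (cases "L (k + 1) = 0")
  case False
  then have "(L (k + 1), 1) \<in> D (k + 1)" by (intro L_row1) (simp_all add: Suc_le_eq)
  then have "(L (k + 1), 1) \<in> D k" using D_mono by blast
  then show ?thesis using L_row by fastforce
qed simp

lemma S_D: "1 \<le> i \<Longrightarrow> D (i - 1) - D i = S i"
  using mu_sk by (auto simp: D_def S_def)

lemma strip_eq: "1 \<le> i \<Longrightarrow> chain_strip lam mu Qf i = S i"
  unfolding chain_strip_def using mc_props S_D by simp

lemma S_sk: "c \<in> S i \<Longrightarrow> c \<in> sk \<and> rk c = i"
  using lozenge_eq[of c] by (auto simp: S_def)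

lemma S_fin: "finite (S i)" using fin_sk by (simp add: S_def)

lemma S_fst_inj: "inj_on fst (S i)"
proof (rule inj_onI)
  fix c c' assume c: "c \<in> S i" "c' \<in> S i" "fst c = fst c'"
  obtain a b b' where cc: "c = (a, b)" "c' = (a, b')" using c(3) by (cases c; cases c') auto
  have "\<not> b < b'" using rk_row[of a b b'] S_sk c cc by fastforce
  moreover have "\<not> b' < b" using rk_row[of a b' b] S_sk c cc by fastforce
  ultimately show "c = c'" using cc by simp
qed

lemma S_T_inj: "inj_on T (S i)"
proof (rule inj_onI)
  fix c c' assume c: "c \<in> S i" "c' \<in> S i" "T c = T c'"
  show "c = c'" using rk_inj[OF _ _ c(3)] S_sk[OF c(1)] S_sk[OF c(2)] by simp
qed

lemma S_in_D: "1 \<le> i \<Longrightarrow> c \<in> S i \<Longrightarrow> c \<in> D (i - 1)"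
  using S_D by blast

definition l0 :: "nat \<Rightarrow> nat" where
  "l0 i = card {c \<in> S i. 1 \<le> fst c \<and> fst c \<le> L i}"

lemma strip_card:
  assumes i: "1 \<le> i"
  shows "card (S i) = (L (i - 1) - L i) + l0 i \<and> l0 i \<le> L i \<and> L i \<le> L (i - 1)"
proof -
  have Lm: "L i \<le> L (i - 1)" using L_mono[of "i - 1"] i by simp
  let ?A = "{c \<in> S i. 1 \<le> fst c \<and> fst c \<le> L i}"
  let ?B = "{c \<in> S i. \<not> (1 \<le> fst c \<and> fst c \<le> L i)}"
  have split: "S i = ?A \<union> ?B" by blast
  have disj: "?A \<inter> ?B = {}" by blast
  have fB: "fst ` ?B = {L i <.. L (i - 1)}"
  proof (rule set_eqI, rule iffI)
    fix r assume "r \<in> fst ` ?B"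
    then obtain c where c: "c \<in> S i" "r = fst c" "\<not> (1 \<le> fst c \<and> fst c \<le> L i)" by auto
    have "c \<in> D (i - 1)" using S_in_D[OF i c(1)] .
    then have "1 \<le> fst c \<and> fst c \<le> L (i - 1)" by (rule L_row)
    then show "r \<in> {L i <.. L (i - 1)}" using c by auto
  next
    fix r assume r: "r \<in> {L i <.. L (i - 1)}"
    then have "(r, 1) \<in> D (i - 1)" by (intro L_row1) auto
    moreover have "(r, 1) \<notin> D i" using L_row[of "(r, 1)" i] r by auto
    ultimately have "(r, 1) \<in> S i" using S_D[OF i] by blast
    then show "r \<in> fst ` ?B" using r by force
  qed
  have cB: "card ?B = L (i - 1) - L i"
  proof -
    have "card ?B = card (fst ` ?B)" by (intro card_image[symmetric]) (rule inj_on_subset[OF S_fst_inj[of i]], blast)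
    then show ?thesis using fB by simp
  qed
  have ce: "card (fst ` ?A) = card ?A" by (intro card_image) (rule inj_on_subset[OF S_fst_inj[of i]], blast)
  have "card (fst ` ?A) \<le> card {1..L i}" by (intro card_mono) auto
  then have "card ?A \<le> L i" using ce by simp
  moreover have "card (S i) = card ?A + card ?B"
  proof -
    have "finite ?A" "finite ?B" using S_fin by auto
    then have "card (?A \<union> ?B) = card ?A + card ?B" using disj by (rule card_Un_disjoint)
    then show ?thesis using split by simp
  qed
  ultimately show ?thesis using cB Lm by (simp add: l0_def)
qed

definition RS :: "nat \<Rightarrow> nat set" where
  "RS i = {r. 1 \<le> r \<and> r \<le> L i \<and> (\<forall>b. (r, b) \<notin> S i)}"

lemma RS_fin: "finite (RS i)"
proof (rule finite_subset)
  show "RS i \<subseteq> {1..L i}" by (auto simp: RS_def)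
qed simp

lemma RS_count:
  assumes "x \<le> L i"
  shows "card (RS i \<inter> {..x}) = x - card {c \<in> S i. fst c \<le> x}"
proof -
  let ?F = "{c \<in> S i. fst c \<le> x}"
  have fm: "r \<in> fst ` ?F \<longleftrightarrow> r \<le> x \<and> (\<exists>b. (r, b) \<in> S i)" for r by force
  have eq: "RS i \<inter> {..x} = {1..x} - fst ` ?F"
  proof (rule set_eqI)
    fix r show "r \<in> RS i \<inter> {..x} \<longleftrightarrow> r \<in> {1..x} - fst ` ?F"
      using fm[of r] assms by (auto simp: RS_def)
  qed
  have sub: "fst ` ?F \<subseteq> {1..x}" using S_sk by (force simp: sk_iff)
  have "card (fst ` ?F) = card ?F" by (intro card_image) (rule inj_on_subset[OF S_fst_inj[of i]], blast)
  then show ?thesis unfolding eq using sub by (simp add: card_Diff_subset finite_subset)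
qed

lemma RS_card: "card (RS i) = L i - l0 i"
proof -
  have "RS i \<inter> {..L i} = RS i" by (auto simp: RS_def)
  moreover have "{c \<in> S i. fst c \<le> L i} = {c \<in> S i. 1 \<le> fst c \<and> fst c \<le> L i}"
    using S_sk by (force simp: sk_iff)
  ultimately show ?thesis using RS_count[of "L i" i] by (simp add: l0_def)
qed

lemma ext_bound:
  assumes i: "1 \<le> i" and big: "n < L (i - 1)"
  shows "2 * (L (i - 1) - n) \<le> card (S i)"
proof -
  let ?r = "L (i - 1)"
  have inD: "(?r, 1) \<in> D (i - 1)" using big by (intro L_row1) auto
  have nmu: "(?r, 1) \<notin> diagram mu" using diagram_row_le[of ?r 1 mu] lmu big by auto
  then have rsk: "(?r, 1) \<in> sk" "rk (?r, 1) \<ge> i" using inD lozenge_eq i by (auto simp: D_def)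
  have lam: "(?r, 1) \<in> diagram lam" using rsk by (simp add: skew_def)
  have "ext_val lam mu T (n + (?r - n), 1) \<ge> enat (2 * (?r - n))"
    using LRS unfolding LRS_def by blast
  moreover have "n + (?r - n) = ?r" using big by simp
  ultimately have "enat (2 * (?r - n)) \<le> enat (T (?r, 1))"
    using nmu lam by (simp add: ext_val_def)
  then have e: "2 * (?r - n) \<le> T (?r, 1)" by simp
  let ?j = "T (?r, 1)"
  have "{1..?j} \<subseteq> T ` S i"
  proof
    fix j' assume j': "j' \<in> {1..?j}"
    have "i \<le> wt ?j" using rsk rk_le[of "(?r, 1)"] by simp
    also have "wt ?j \<le> wt j'" using j' by (intro wt_mono) auto
    finally obtain c where c: "c \<in> sk" "T c = j'" "rk c = i" using i rk_surj by blast
    then have "c \<in> S i" using lozenge_eq by (simp add: S_def)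
    then show "j' \<in> T ` S i" using c by force
  qed
  then have "card {1..?j} \<le> card (T ` S i)" using S_fin by (intro card_mono) auto
  also have "\<dots> \<le> card (S i)" using S_fin by (rule card_image_le)
  finally show ?thesis using e by simp
qed

lemma transfer:
  assumes i: "2 \<le> i"
  shows "card {c \<in> S i. fst c \<le> x} \<le> card {c \<in> S (i - 1). fst c \<le> x}"
proof -
  let ?F = "{c \<in> S i. fst c \<le> x}" and ?G = "{c \<in> S (i - 1). fst c \<le> x}"
  have "T ` ?F \<subseteq> T ` ?G"
  proof
    fix j assume "j \<in> T ` ?F"
    then obtain c where c: "c \<in> S i" "fst c \<le> x" "j = T c" by auto
    have cs: "c \<in> sk" "rk c = i" using S_sk[OF c(1)] by auto
    have w: "i - 1 \<le> wt (T c)" using rk_le[of c] cs by simp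
    have i1: "1 \<le> i - 1" using i by simp
    obtain c' where c': "c' \<in> sk" "T c' = T c" "rk c' = i - 1" using rk_surj[OF i1 w] by blast
    have "fst c' \<le> fst c" using rk_rowle[OF c'(1) cs(1) c'(2)] c'(3) cs(2) i by simp
    moreover have "c' \<in> S (i - 1)" using c' lozenge_eq by (simp add: S_def)
    ultimately have "c' \<in> ?G" using c by simp
    then show "j \<in> T ` ?G" using c c' by (metis image_eqI)
  qed
  then have "card (T ` ?F) \<le> card (T ` ?G)" using S_fin by (intro card_mono) auto
  moreover have "card (T ` ?F) = card ?F" by (intro card_image) (rule inj_on_subset[OF S_T_inj[of i]], blast)
  moreover have "card (T ` ?G) = card ?G" by (intro card_image) (rule inj_on_subset[OF S_T_inj[of "i - 1"]], blast)
  ultimately show ?thesis by simp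
qed

end


context lrs
begin

lemma l0_alt: "l0 i = card {c \<in> S i. fst c \<le> L i}"
proof -
  have "{c \<in> S i. fst c \<le> L i} = {c \<in> S i. 1 \<le> fst c \<and> fst c \<le> L i}"
    using S_sk by (force simp: sk_iff)
  then show ?thesis by (simp add: l0_def)
qed

lemma S_le: "1 \<le> i \<Longrightarrow> {c \<in> S i. fst c \<le> L (i - 1)} = S i"
  using S_in_D L_row by blast

lemma main_lrs:
  assumes i: "1 \<le> i"
  shows
    "(length (mu_chain lam mu Qf (i - 1)) = Qcount lam mu Qf i + slack_t0 lam mu Qf i \<and>
      Qcount lam mu Qf i + slack_t0 lam mu Qf i \<ge> length (mu_chain lam mu Qf i)) \<and>
     (slack_t0 lam mu Qf (i - 1) \<le> slack_t0 lam mu Qf i \<and>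
      slack_t0 lam mu Qf i \<le> length (mu_chain lam mu Qf i) \<and>
      length (mu_chain lam mu Qf i) \<le> length (mu_chain lam mu Qf (i - 1))) \<and>
     (2 * n \<ge> Qcount lam mu Qf i + 2 * slack_t0 lam mu Qf i \<and>
      Qcount lam mu Qf i + 2 * slack_t0 lam mu Qf i
        = length (mu_chain lam mu Qf (i - 1)) + slack_t0 lam mu Qf i \<and>
      2 * n - slack_t0 lam mu Qf i \<ge> Qcount lam mu Qf i + slack_t0 lam mu Qf i \<and>
      Qcount lam mu Qf i + slack_t0 lam mu Qf i = length (mu_chain lam mu Qf (i - 1))) \<and>
     le_r (slack_vec lam mu Qf i) (slack_vec lam mu Qf (i - 1)) \<and>
     (set (slack_vec lam mu Qf i) \<subseteq> {1..length (mu_chain lam mu Qf i)} \<and>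
      {1..length (mu_chain lam mu Qf i)} \<subseteq> {1..length (mu_chain lam mu Qf (i - 1))} \<and>
      {1..length (mu_chain lam mu Qf (i - 1))} \<subseteq> {1..2 * n - slack_t0 lam mu Qf i})"
proof -
  have Qc: "Qcount lam mu Qf i = card (S i)" by (simp add: Qcount_def S_def)
  have l0e: "slack_l0 lam mu Qf k = l0 k" if "1 \<le> k" for k
    using strip_eq[OF that] by (simp add: slack_l0_def l0_def)
  have t0e: "slack_t0 lam mu Qf k = L k - l0 k" if "1 \<le> k" for k
    using that l0e[OF that] by (simp add: slack_t0_def)
  have sve: "slack_vec lam mu Qf k = sorted_list_of_set (RS k)" if "1 \<le> k" for k
    using that strip_eq[OF that] by (simp add: slack_vec_def RS_def)
  define t where "t = L i - l0 i"
  have ti: "slack_t0 lam mu Qf i = t" using t0e[OF i] t_def by simp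
  have sc: "card (S i) = (L (i - 1) - L i) + l0 i" "l0 i \<le> L i" "L i \<le> L (i - 1)"
    using strip_card[OF i] by auto
  have A: "L (i - 1) = card (S i) + t" using sc t_def by simp
  have tL: "t \<le> L i" using t_def by simp
  have tprev: "slack_t0 lam mu Qf (i - 1) \<le> t"
  proof (cases "i = 1")
    case True then show ?thesis by (simp add: slack_t0_def)
  next
    case False
    then have i2: "2 \<le> i" using i by simp
    have "card (S i) = card {c \<in> S i. fst c \<le> L (i - 1)}" using S_le[OF i] by simp
    also have "\<dots> \<le> card {c \<in> S (i - 1). fst c \<le> L (i - 1)}" by (rule transfer[OF i2])
    also have "\<dots> = l0 (i - 1)" by (simp add: l0_alt)
    finally have "card (S i) \<le> l0 (i - 1)" .
    moreover have "slack_t0 lam mu Qf (i - 1) = L (i - 1) - l0 (i - 1)" using t0e[of "i - 1"] i2 by simp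
    ultimately show ?thesis using A by simp
  qed
  have C: "L (i - 1) + t \<le> 2 * n"
  proof (cases "n < L (i - 1)")
    case True
    then have "2 * (L (i - 1) - n) \<le> card (S i)" by (rule ext_bound[OF i])
    then show ?thesis using A True by simp
  next
    case False
    then show ?thesis using tL sc(3) by simp
  qed
  have RSc: "card (RS k) = slack_t0 lam mu Qf k" if "1 \<le> k" for k
    using RS_card t0e[OF that] by simp
  have D: "le_r (slack_vec lam mu Qf i) (slack_vec lam mu Qf (i - 1))"
  proof (cases "i = 1")
    case True then show ?thesis by (simp add: slack_vec_def le_r_def)
  next
    case False
    then have i2: "2 \<le> i" and i1: "1 \<le> i - 1" using i by auto
    have cB: "card (RS (i - 1)) \<le> card (RS i)"
      using RSc[OF i1] RSc[OF i] tprev ti by simp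
    have cx: "card (RS (i - 1) \<inter> {..x}) \<le> card (RS i \<inter> {..x})" for x
    proof (cases "x \<le> L i")
      case True
      have "card (RS (i - 1) \<inter> {..x}) = x - card {c \<in> S (i - 1). fst c \<le> x}"
        using True sc(3) by (intro RS_count) simp
      also have "\<dots> \<le> x - card {c \<in> S i. fst c \<le> x}"
        using transfer[OF i2, of x] by simp
      also have "\<dots> = card (RS i \<inter> {..x})" using RS_count[OF True] by simp
      finally show ?thesis .
    next
      case False
      have "RS i \<inter> {..x} = RS i" using False by (auto simp: RS_def)
      moreover have "card (RS (i - 1) \<inter> {..x}) \<le> card (RS (i - 1))"
        using RS_fin by (intro card_mono) auto
      ultimately show ?thesis using cB by simp
    qed
    show ?thesis unfolding sve[OF i] sve[OF i1]
      by (rule le_r_sets[OF RS_fin RS_fin cB cx])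
  qed
  have E: "set (slack_vec lam mu Qf i) \<subseteq> {1..L i}"
    unfolding sve[OF i] using RS_fin by (auto simp: RS_def)
  show ?thesis unfolding Qc ti
  proof (intro conjI)
    show "L (i - 1) = card (S i) + t" by (rule A)
    show "card (S i) + t \<ge> L i" using A sc(3) by linarith
    show "slack_t0 lam mu Qf (i - 1) \<le> t" by (rule tprev)
    show "t \<le> L i" by (rule tL)
    show "L i \<le> L (i - 1)" by (rule sc(3))
    show "2 * n \<ge> card (S i) + 2 * t" using A C by linarith
    show "card (S i) + 2 * t = L (i - 1) + t" using A by linarith
    show "2 * n - t \<ge> card (S i) + t" using A C by linarith
    show "card (S i) + t = L (i - 1)" using A by linarith
    show "le_r (slack_vec lam mu Qf i) (slack_vec lam mu Qf (i - 1))" by (rule D)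
    show "set (slack_vec lam mu Qf i) \<subseteq> {1..L i}" by (rule E)
    show "{1..L i} \<subseteq> {1..L (i - 1)}" using sc(3) by auto
    show "{1..L (i - 1)} \<subseteq> {1..2 * n - t}" using C by auto
  qed
qed

end

theorem proposition3:
  fixes n :: nat and lam mu :: "nat list" and Q :: "nat \<times> nat \<Rightarrow> nat" and i :: nat
  assumes "is_partition lam" and "length lam \<le> 2 * n"
    and "is_partition mu" and "length mu \<le> n"
    and "diagram mu \<subseteq> diagram lam"
    and "Q \<in> Rec n lam mu"
    and "1 \<le> i" and "i \<le> Nmax lam mu Q"
  shows
    "(length (mu_chain lam mu Q (i - 1)) = Qcount lam mu Q i + slack_t0 lam mu Q i \<and>
      Qcount lam mu Q i + slack_t0 lam mu Q i \<ge> length (mu_chain lam mu Q i)) \<and>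
     (slack_t0 lam mu Q (i - 1) \<le> slack_t0 lam mu Q i \<and>
      slack_t0 lam mu Q i \<le> length (mu_chain lam mu Q i) \<and>
      length (mu_chain lam mu Q i) \<le> length (mu_chain lam mu Q (i - 1))) \<and>
     (2 * n \<ge> Qcount lam mu Q i + 2 * slack_t0 lam mu Q i \<and>
      Qcount lam mu Q i + 2 * slack_t0 lam mu Q i
        = length (mu_chain lam mu Q (i - 1)) + slack_t0 lam mu Q i \<and>
      2 * n - slack_t0 lam mu Q i \<ge> Qcount lam mu Q i + slack_t0 lam mu Q i \<and>
      Qcount lam mu Q i + slack_t0 lam mu Q i = length (mu_chain lam mu Q (i - 1))) \<and>
     le_r (slack_vec lam mu Q i) (slack_vec lam mu Q (i - 1)) \<and>
     (set (slack_vec lam mu Q i) \<subseteq> {1..length (mu_chain lam mu Q i)} \<and>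
      {1..length (mu_chain lam mu Q i)} \<subseteq> {1..length (mu_chain lam mu Q (i - 1))} \<and>
      {1..length (mu_chain lam mu Q (i - 1))} \<subseteq> {1..2 * n - slack_t0 lam mu Q i})"
proof -
  obtain T where T: "LRS n lam mu T" "Q = lozenge lam mu T"
    using assms(6) by (auto simp: Rec_def)
  interpret lrs n lam mu T
    using assms(1,3,4) T(1) by unfold_locales
  show ?thesis unfolding T(2) by (rule main_lrs[OF assms(7)])
qed


end
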